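(* A reflexive graph $G$ contains an invertible pair if and only if it contains a weak edge-asteroid.
   Context: A graph is reflexive if every vertex carries a loop; its edge set $E(G)$ contains all loops $vv$, and an "edge" $uu'$ may be a loop ($u=u'$). A walk $u_0u_1\dots u_t$ ($t\ge 1$) is a sequence of vertices with $u_ju_{j+1}\in E(G)$ for all $j$ (consecutive vertices may coincide); its edges are $u_ju_{j+1}$. $Z(G)$ is the set of ordered pairs $(u,v)$ of distinct vertices of $G$. For $(u,v),(u',v')\in Z(G)$, $(u,v)$ forces $(u',v')$, written $(u,v)\Lambda(u',v')$, if either $u=u'$ and $v=v'$, or $uu'\in E(G)$, $vv'\in E(G)$, $uv'\notin E(G)$ and $vu'\notin E(G)$. We write $(u,v)\sim(u',v')$ if there are walks $w_1\dots w_m$ and $z_1\dots z_m$ in $G$ with $(w_1,z_1)=(u,v)$, $(w_m,z_m)=(u',v')$ and $(w_j,z_j)\Lambda(w_{j+1},z_{j+1})$ for all $j$. An invertible pair is a pair of distinct vertices $u,v$ with $(u,v)\sim(v,u)$. For edges $uu'$, $vv'$ of $G$ with $\{u,u'\}\cap\{v,v'\}=\emptyset$, $uu'$ avoids $vv'$ if one of the following holds: (i) $u=u'$, $v=v'$, $uv\notin E(G)$; (ii) $u=u'$, $v\ne v'$, $uv\notin E(G)$ and $uv'\notin E(G)$; (iii) $u\ne u'$, $v=v'$, $uv\notin E(G)$ and $u'v\notin E(G)$; (iv) $u\ne u'$, $v\ne v'$, and $\{u,u',v,v'\}$ induces a $2K_2$, a $P_4$, or a $C_4$ in $G$. An edge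 avoids a walk if it avoids every edge of the walk. A weak edge-asteroid is a set of edges $x_0y_0,\dots,x_{2k}y_{2k}$ ($k\ge1$) such that for each $i$, $x_iy_i$ avoids some walk whose first edge is $x_{i+k}y_{i+k}$ and whose last edge is $x_{i+k+1}y_{i+k+1}$ (subscripts modulo $2k+1$). *)

theory Defs
  imports Main
begin

definition reflexive_graph :: "'a set \<Rightarrow> ('a \<Rightarrow> 'a \<Rightarrow> bool) \<Rightarrow> bool" where
  "reflexive_graph V E \<longleftrightarrow>
     (\<forall>u v. E u v \<longrightarrow> u \<in> V \<and> v \<in> V) \<and>
     (\<forall>u v. E u v \<longrightarrow> E v u) \<and>
     (\<forall>v\<in>V. E v v)"

definition is_walk :: "'a set \<Rightarrow> ('a \<Rightarrow> 'a \<Rightarrow> bool) \<Rightarrow> 'a list \<Rightarrow> bool" where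
  "is_walk V E w \<longleftrightarrow> length w \<ge> 2 \<and> set w \<subseteq> V \<and>
     (\<forall>j. Suc j < length w \<longrightarrow> E (w ! j) (w ! Suc j))"

definition Zset :: "'a set \<Rightarrow> ('a \<times> 'a) set" where
  "Zset V = {(u, v). u \<in> V \<and> v \<in> V \<and> u \<noteq> v}"

definition forces :: "('a \<Rightarrow> 'a \<Rightarrow> bool) \<Rightarrow> 'a \<times> 'a \<Rightarrow> 'a \<times> 'a \<Rightarrow> bool" where
  "forces E p q \<longleftrightarrow> (case p of (u, v) \<Rightarrow> case q of (u', v') \<Rightarrow>
      (u = u' \<and> v = v') \<or> (E u u' \<and> E v v' \<and> \<not> E u v' \<and> \<not> E v u'))"

definition pair_sim :: "'a set \<Rightarrow> ('a \<Rightarrow> 'a \<Rightarrow> bool) \<Rightarrow> 'a \<times> 'a \<Rightarrow> 'a \<times> 'a \<Rightarrow> bool" where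
  "pair_sim V E p q \<longleftrightarrow> (\<exists>ws zs.
      is_walk V E ws \<and> is_walk V E zs \<and> length ws = length zs \<and>
      (\<forall>j < length ws. (ws ! j, zs ! j) \<in> Zset V) \<and>
      (hd ws, hd zs) = p \<and> (last ws, last zs) = q \<and>
      (\<forall>j. Suc j < length ws \<longrightarrow> forces E (ws ! j, zs ! j) (ws ! Suc j, zs ! Suc j)))"

definition has_invertible_pair :: "'a set \<Rightarrow> ('a \<Rightarrow> 'a \<Rightarrow> bool) \<Rightarrow> bool" where
  "has_invertible_pair V E \<longleftrightarrow>
     (\<exists>u v. u \<in> V \<and> v \<in> V \<and> u \<noteq> v \<and> pair_sim V E (u, v) (v, u))"

definition induces :: "('a \<Rightarrow> 'a \<Rightarrow> bool) \<Rightarrow> 'a set \<Rightarrow> nat \<Rightarrow> (nat \<Rightarrow> nat \<Rightarrow> bool) \<Rightarrow> bool" where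
  "induces E S n H \<longleftrightarrow> (\<exists>f. bij_betw f {..<n} S \<and>
     (\<forall>i<n. \<forall>j<n. i \<noteq> j \<longrightarrow> (E (f i) (f j) \<longleftrightarrow> H i j)))"

definition twoK2 :: "nat \<Rightarrow> nat \<Rightarrow> bool" where
  "twoK2 i j \<longleftrightarrow> {i, j} = {0, 1} \<or> {i, j} = {2, 3}"

definition P4 :: "nat \<Rightarrow> nat \<Rightarrow> bool" where
  "P4 i j \<longleftrightarrow> {i, j} = {0, 1} \<or> {i, j} = {1, 2} \<or> {i, j} = {2, 3}"

definition C4 :: "nat \<Rightarrow> nat \<Rightarrow> bool" where
  "C4 i j \<longleftrightarrow> {i, j} = {0, 1} \<or> {i, j} = {1, 2} \<or> {i, j} = {2, 3} \<or> {i, j} = {3, 0}"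

definition edge_avoids :: "('a \<Rightarrow> 'a \<Rightarrow> bool) \<Rightarrow> 'a \<times> 'a \<Rightarrow> 'a \<times> 'a \<Rightarrow> bool" where
  "edge_avoids E e f \<longleftrightarrow> (case e of (u, u') \<Rightarrow> case f of (v, v') \<Rightarrow>
     E u u' \<and> E v v' \<and> {u, u'} \<inter> {v, v'} = {} \<and>
     ((u = u' \<and> v = v' \<and> \<not> E u v) \<or>
      (u = u' \<and> v \<noteq> v' \<and> \<not> E u v \<and> \<not> E u v') \<or>
      (u \<noteq> u' \<and> v = v' \<and> \<not> E u v \<and> \<not> E u' v) \<or>
      (u \<noteq> u' \<and> v \<noteq> v' \<and>
        (induces E {u, u', v, v'} 4 twoK2 \<or> induces E {u, u', v, v'} 4 P4 \<or>
         induces E {u, u', v, v'} 4 C4))))"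

definition edge_avoids_walk :: "('a \<Rightarrow> 'a \<Rightarrow> bool) \<Rightarrow> 'a \<times> 'a \<Rightarrow> 'a list \<Rightarrow> bool" where
  "edge_avoids_walk E e w \<longleftrightarrow>
     (\<forall>j. Suc j < length w \<longrightarrow> edge_avoids E e (w ! j, w ! Suc j))"

definition weak_edge_asteroid :: "'a set \<Rightarrow> ('a \<Rightarrow> 'a \<Rightarrow> bool) \<Rightarrow> nat \<Rightarrow> (nat \<Rightarrow> 'a) \<Rightarrow> (nat \<Rightarrow> 'a) \<Rightarrow> bool" where
  "weak_edge_asteroid V E k x y \<longleftrightarrow> k \<ge> 1 \<and>
     (\<forall>i \<le> 2 * k. E (x i) (y i)) \<and>
     (\<forall>i \<le> 2 * k. \<exists>w. is_walk V E w \<and>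
        {w ! 0, w ! 1} = {x ((i + k) mod (2 * k + 1)), y ((i + k) mod (2 * k + 1))} \<and>
        {w ! (length w - 2), w ! (length w - 1)} =
          {x ((i + k + 1) mod (2 * k + 1)), y ((i + k + 1) mod (2 * k + 1))} \<and>
        edge_avoids_walk E (x i, y i) w)"

definition has_weak_edge_asteroid :: "'a set \<Rightarrow> ('a \<Rightarrow> 'a \<Rightarrow> bool) \<Rightarrow> bool" where
  "has_weak_edge_asteroid V E \<longleftrightarrow> (\<exists>k x y. weak_edge_asteroid V E k x y)"

end

theory Submission
  imports Defs
begin


lemma rg_sym: "reflexive_graph V E \<Longrightarrow> E a b \<Longrightarrow> E b a"
  unfolding reflexive_graph_def by blast
lemma rg_refl: "reflexive_graph V E \<Longrightarrow> a \<in> V \<Longrightarrow> E a a"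
  unfolding reflexive_graph_def by blast
lemma rg_V1: "reflexive_graph V E \<Longrightarrow> E a b \<Longrightarrow> a \<in> V"
  unfolding reflexive_graph_def by blast
lemma rg_V2: "reflexive_graph V E \<Longrightarrow> E a b \<Longrightarrow> b \<in> V"
  unfolding reflexive_graph_def by blast

definition Srel :: "'a set \<Rightarrow> ('a \<Rightarrow> 'a \<Rightarrow> bool) \<Rightarrow> (('a \<times> 'a) \<times> ('a \<times> 'a)) set" where
  "Srel V E = {((u,v),(u',v')). u \<in> V \<and> v \<in> V \<and> u \<noteq> v \<and> u' \<in> V \<and> v' \<in> V \<and> u' \<noteq> v' \<and>
      E u u' \<and> E v v' \<and> \<not> E u v' \<and> \<not> E v u'}"

lemma Srel_I: "u \<in> V \<Longrightarrow> v \<in> V \<Longrightarrow> u \<noteq> v \<Longrightarrow> u' \<in> V \<Longrightarrow> v' \<in> V \<Longrightarrow> u' \<noteq> v' \<Longrightarrow>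
   E u u' \<Longrightarrow> E v v' \<Longrightarrow> \<not> E u v' \<Longrightarrow> \<not> E v u' \<Longrightarrow> ((u,v),(u',v')) \<in> Srel V E"
  unfolding Srel_def by blast

lemma Srel_D: "((u,v),(u',v')) \<in> Srel V E \<Longrightarrow> u \<in> V \<and> v \<in> V \<and> u \<noteq> v \<and> u' \<in> V \<and> v' \<in> V \<and> u' \<noteq> v' \<and>
      E u u' \<and> E v v' \<and> \<not> E u v' \<and> \<not> E v u'"
  unfolding Srel_def by blast

lemma Srel_sym: "reflexive_graph V E \<Longrightarrow> (p,q) \<in> Srel V E \<Longrightarrow> (q,p) \<in> Srel V E"
  unfolding Srel_def by (auto dest: rg_sym)

lemma Srel_swap: "(p,q) \<in> Srel V E \<Longrightarrow> (prod.swap p, prod.swap q) \<in> Srel V E"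
  unfolding Srel_def by auto

lemma Srel_rtr_sym: assumes rg: "reflexive_graph V E" shows "(p,q) \<in> (Srel V E)\<^sup>* \<Longrightarrow> (q,p) \<in> (Srel V E)\<^sup>*"
proof (induction rule: rtrancl_induct)
  case base then show ?case by simp
next
  case (step y z)
  then have "(z,y) \<in> Srel V E" using Srel_sym rg by metis
  then show ?case using step by (meson converse_rtrancl_into_rtrancl)
qed

lemma Srel_rtr_swap: "(p,q) \<in> (Srel V E)\<^sup>* \<Longrightarrow> (prod.swap p, prod.swap q) \<in> (Srel V E)\<^sup>*"
proof (induction rule: rtrancl_induct)
  case base then show ?case by simp
next
  case (step y z)
  then show ?case using Srel_swap by (meson rtrancl_into_rtrancl)
qed

lemma rtr_to_pair_sim:
  assumes rg: "reflexive_graph V E" and pq: "(p,q) \<in> (Srel V E)\<^sup>*" and pZ: "p \<in> Zset V"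
  shows "pair_sim V E p q"
  using pq
proof (induction rule: rtrancl_induct)
  case base
  obtain u v where p: "p = (u,v)" by fastforce
  have uv: "u \<in> V" "v \<in> V" "u \<noteq> v" using pZ p by (auto simp: Zset_def)
  have w1: "is_walk V E [u,u]" using uv rg_refl[OF rg] by (auto simp: is_walk_def less_Suc_eq)
  have w2: "is_walk V E [v,v]" using uv rg_refl[OF rg] by (auto simp: is_walk_def less_Suc_eq)
  show ?case unfolding pair_sim_def
    apply (rule exI[of _ "[u,u]"], rule exI[of _ "[v,v]"])
    using w1 w2 uv p by (auto simp: Zset_def less_Suc_eq forces_def)
next
  case (step y z)
  obtain u v where y: "y = (u,v)" by fastforce
  obtain u' v' where z: "z = (u',v')" by fastforce
  have S: "u \<in> V \<and> v \<in> V \<and> u \<noteq> v \<and> u' \<in> V \<and> v' \<in> V \<and> u' \<noteq> v' \<and>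
      E u u' \<and> E v v' \<and> \<not> E u v' \<and> \<not> E v u'" using step(2) y z Srel_D by metis
  from step(3) obtain ws zs where H: "is_walk V E ws" "is_walk V E zs" "length ws = length zs"
      "\<forall>j < length ws. (ws ! j, zs ! j) \<in> Zset V"
      "(hd ws, hd zs) = p" "(last ws, last zs) = y"
      "\<forall>j. Suc j < length ws \<longrightarrow> forces E (ws ! j, zs ! j) (ws ! Suc j, zs ! Suc j)"
    unfolding pair_sim_def by blast
  have len: "length ws \<ge> 2" using H(1) by (simp add: is_walk_def)
  have lastw: "ws ! (length ws - 1) = u" "zs ! (length zs - 1) = v"
    proof -
    have "ws \<noteq> []" "zs \<noteq> []" using len H(3) by auto
    then show "ws ! (length ws - 1) = u" "zs ! (length zs - 1) = v"
      using H(6) y by (simp_all add: last_conv_nth)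
  qed
  let ?ws = "ws @ [u']" and ?zs = "zs @ [v']"
  have nthw: "\<And>j. j < length ws \<Longrightarrow> ?ws ! j = ws ! j" by (simp add: nth_append)
  have nthz: "\<And>j. j < length zs \<Longrightarrow> ?zs ! j = zs ! j" by (simp add: nth_append)
  have W1: "is_walk V E ?ws"
    unfolding is_walk_def
  proof (intro conjI allI impI)
    show "2 \<le> length ?ws" using len by simp
    show "set ?ws \<subseteq> V" using H(1) S by (auto simp: is_walk_def)
    fix j assume j: "Suc j < length ?ws"
    show "E (?ws ! j) (?ws ! Suc j)"
    proof (cases "Suc j < length ws")
      case True then show ?thesis using H(1) nthw by (simp add: is_walk_def nth_append)
    next
      case False then have jj: "Suc j = length ws" using j by simp
      then have "?ws ! Suc j = u'" by (metis nth_append_length)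
      moreover have "?ws ! j = u" using jj lastw(1) by (metis diff_Suc_1 lessI nth_append)
      ultimately have "?ws ! j = u" "?ws ! Suc j = u'" by auto
      then show ?thesis using S by simp
    qed
  qed
  have W2: "is_walk V E ?zs"
    unfolding is_walk_def
  proof (intro conjI allI impI)
    show "2 \<le> length ?zs" using len H(3) by simp
    show "set ?zs \<subseteq> V" using H(2) S by (auto simp: is_walk_def)
    fix j assume j: "Suc j < length ?zs"
    show "E (?zs ! j) (?zs ! Suc j)"
    proof (cases "Suc j < length zs")
      case True then show ?thesis using H(2) by (simp add: is_walk_def nth_append)
    next
      case False then have jj: "Suc j = length zs" using j by simp
      then have "?zs ! Suc j = v'" by (metis nth_append_length)
      moreover have "?zs ! j = v" using jj lastw(2) by (metis diff_Suc_1 lessI nth_append)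
      ultimately have "?zs ! j = v" "?zs ! Suc j = v'" by auto
      then show ?thesis using S by simp
    qed
  qed
  show ?case unfolding pair_sim_def
  proof (rule exI[of _ ?ws], rule exI[of _ ?zs], intro conjI allI impI)
    show "is_walk V E ?ws" by (rule W1)
    show "is_walk V E ?zs" by (rule W2)
    show "length ?ws = length ?zs" using H(3) by simp
    show "(hd ?ws, hd ?zs) = p" using H(5) len H(3)
      by (metis hd_append2 list.size(3) not_numeral_le_zero)
    show "(last ?ws, last ?zs) = z" using z by simp
  next
    fix j assume j: "j < length ?ws"
    show "(?ws ! j, ?zs ! j) \<in> Zset V"
    proof (cases "j < length ws")
      case True then show ?thesis using H(4) H(3) by (simp add: nth_append)
    next
      case False then have "j = length ws" using j by simp
      then show ?thesis using S H(3) by (simp add: nth_append Zset_def)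
    qed
  next
    fix j assume j: "Suc j < length ?ws"
    show "forces E (?ws ! j, ?zs ! j) (?ws ! Suc j, ?zs ! Suc j)"
    proof (cases "Suc j < length ws")
      case True then show ?thesis using H(7) H(3) by (simp add: nth_append)
    next
      case False then have jj: "Suc j = length ws" using j by simp
      then have "?ws ! Suc j = u'" "?zs ! Suc j = v'" using H(3) by (metis nth_append_length)+
      moreover have "?ws ! j = u" "?zs ! j = v" using jj lastw H(3) by (metis diff_Suc_1 lessI nth_append)+
      ultimately show ?thesis using S by (simp add: forces_def)
    qed
  qed
qed

lemma pair_sim_to_rtr:
  assumes "pair_sim V E p q"
  shows "(p,q) \<in> (Srel V E)\<^sup>*"
proof -
  from assms obtain ws zs where H: "is_walk V E ws" "is_walk V E zs" "length ws = length zs"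
      "\<forall>j < length ws. (ws ! j, zs ! j) \<in> Zset V"
      "(hd ws, hd zs) = p" "(last ws, last zs) = q"
      "\<forall>j. Suc j < length ws \<longrightarrow> forces E (ws ! j, zs ! j) (ws ! Suc j, zs ! Suc j)"
    unfolding pair_sim_def by blast
  have len: "length ws \<ge> 2" using H(1) by (simp add: is_walk_def)
  have "\<forall>j. j < length ws \<longrightarrow> (p, (ws ! j, zs ! j)) \<in> (Srel V E)\<^sup>*"
  proof (intro allI)
    fix j show "j < length ws \<longrightarrow> (p, (ws ! j, zs ! j)) \<in> (Srel V E)\<^sup>*"
    proof (induction j)
      case 0
        have "ws \<noteq> []" "zs \<noteq> []" using len H(3) by auto
        then show ?case using H(5) by (simp add: hd_conv_nth)
    next
      case (Suc j)
      show ?case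
      proof
        assume j: "Suc j < length ws"
        have IH: "(p, (ws ! j, zs ! j)) \<in> (Srel V E)\<^sup>*" using Suc j by simp
        have F: "forces E (ws ! j, zs ! j) (ws ! Suc j, zs ! Suc j)" using H(7) j by blast
        have Z1: "(ws ! j, zs ! j) \<in> Zset V" "(ws ! Suc j, zs ! Suc j) \<in> Zset V" using H(4) j by auto
        show "(p, (ws ! Suc j, zs ! Suc j)) \<in> (Srel V E)\<^sup>*"
        proof (cases "ws ! j = ws ! Suc j \<and> zs ! j = zs ! Suc j")
          case True then show ?thesis using IH by simp
        next
          case False
          then have "((ws ! j, zs ! j), (ws ! Suc j, zs ! Suc j)) \<in> Srel V E"
            using F Z1 by (auto simp: forces_def Srel_def Zset_def)
          then show ?thesis using IH by (meson rtrancl_into_rtrancl)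
        qed
      qed
    qed
  qed
  moreover have "ws \<noteq> []" "zs \<noteq> []" using len H(3) by auto
  ultimately show ?thesis using H(6) H(3) by (auto simp: last_conv_nth)
qed



lemma all4: "(\<forall>i<(4::nat). P i) \<longleftrightarrow> P 0 \<and> P 1 \<and> P 2 \<and> P 3"
  by (auto simp: numeral_eq_Suc less_Suc_eq)

lemma induces4I:
  assumes "distinct [a,b,c,d]"
    and "\<forall>i<4. \<forall>j<4. i \<noteq> j \<longrightarrow> (E ([a,b,c,d]!i) ([a,b,c,d]!j) \<longleftrightarrow> H i j)"
  shows "induces E {a,b,c,d} 4 H"
  unfolding induces_def
proof (rule exI[of _ "\<lambda>i. [a,b,c,d]!i"], intro conjI)
  show "bij_betw (\<lambda>i. [a, b, c, d] ! i) {..<4} {a, b, c, d}"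
    using bij_betw_nth[OF assms(1), of "{..<4}" "{a,b,c,d}"] by simp
  show "\<forall>i<4. \<forall>j<4. i \<noteq> j \<longrightarrow> E ([a, b, c, d] ! i) ([a, b, c, d] ! j) = H i j" using assms(2) .
qed

lemma avoid1:
  assumes rg: "reflexive_graph V E" and e1: "E p p'" and e2: "E q q'"
    and n1: "\<not> E p q'" and n2: "\<not> E p' q" and d1: "p \<noteq> q" and d2: "p' \<noteq> q'"
  shows "edge_avoids E (p,p') (q,q')"
proof -
  have V: "p \<in> V" "p' \<in> V" "q \<in> V" "q' \<in> V" using e1 e2 rg_V1[OF rg] rg_V2[OF rg] by blast+
  have S: "\<And>a b. E a b \<longleftrightarrow> E b a" using rg_sym[OF rg] by blast
  have R: "\<And>a. a \<in> V \<Longrightarrow> E a a" using rg_refl[OF rg] by blast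
  have d3: "p \<noteq> q'" using n1 R V by blast
  have d4: "p' \<noteq> q" using n2 R V by blast
  have disj: "{p,p'} \<inter> {q,q'} = {}" using d1 d2 d3 d4 by auto
  have main: "(p = p' \<and> q = q' \<and> \<not> E p q) \<or>
      (p = p' \<and> q \<noteq> q' \<and> \<not> E p q \<and> \<not> E p q') \<or>
      (p \<noteq> p' \<and> q = q' \<and> \<not> E p q \<and> \<not> E p' q) \<or>
      (p \<noteq> p' \<and> q \<noteq> q' \<and>
        (induces E {p, p', q, q'} 4 twoK2 \<or> induces E {p, p', q, q'} 4 P4 \<or>
         induces E {p, p', q, q'} 4 C4))"
  proof (cases "p = p'")
    case True
    then show ?thesis using n1 n2 S by (cases "q = q'") auto
  next
    case pp: False
    show ?thesis
    proof (cases "q = q'")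
      case True then show ?thesis using pp n1 n2 S by auto
    next
      case qq: False
      have dist: "distinct [p,p',q,q']" "distinct [p',p,q,q']" "distinct [p,p',q',q]"
        using pp qq d1 d2 d3 d4 by auto
      have ind: "induces E {p, p', q, q'} 4 twoK2 \<or> induces E {p, p', q, q'} 4 P4 \<or>
         induces E {p, p', q, q'} 4 C4"
      proof (cases "E p q")
        case pq: True
        show ?thesis
        proof (cases "E p' q'")
          case True
          have "induces E {p, p', q', q} 4 C4"
            apply (rule induces4I[OF dist(3)])
            using pq True e1 e2 n1 n2 S by (simp add: all4 C4_def doubleton_eq_iff)
          then show ?thesis by (simp add: insert_commute)
        next
          case False
          have "induces E {p', p, q, q'} 4 P4"
            apply (rule induces4I[OF dist(2)])
            using pq False e1 e2 n1 n2 S by (simp add: all4 P4_def doubleton_eq_iff)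
          then show ?thesis by (simp add: insert_commute)
        qed
      next
        case pq: False
        show ?thesis
        proof (cases "E p' q'")
          case True
          have "induces E {p, p', q', q} 4 P4"
            apply (rule induces4I[OF dist(3)])
            using pq True e1 e2 n1 n2 S by (simp add: all4 P4_def doubleton_eq_iff)
          then show ?thesis by (simp add: insert_commute)
        next
          case False
          have "induces E {p, p', q, q'} 4 twoK2"
            apply (rule induces4I[OF dist(1)])
            using pq False e1 e2 n1 n2 S by (simp add: all4 twoK2_def doubleton_eq_iff)
          then show ?thesis by simp
        qed
      qed
      then show ?thesis using pp qq by blast
    qed
  qed
  show ?thesis unfolding edge_avoids_def using e1 e2 disj main by simp
qed

lemma avoid2:
  assumes rg: "reflexive_graph V E" and e1: "E p p'" and e2: "E q q'"
    and n1: "\<not> E p q" and n2: "\<not> E p' q'"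
  shows "edge_avoids E (p,p') (q,q')"
proof -
  have V: "p \<in> V" "p' \<in> V" "q \<in> V" "q' \<in> V" using e1 e2 rg_V1[OF rg] rg_V2[OF rg] by blast+
  have S: "\<And>a b. E a b \<longleftrightarrow> E b a" using rg_sym[OF rg] by blast
  have R: "\<And>a. a \<in> V \<Longrightarrow> E a a" using rg_refl[OF rg] by blast
  have A: "edge_avoids E (p,p') (q',q)"
    apply (rule avoid1[OF rg e1])
    using e2 S n1 n2 R V by metis+
  have "{p, p', q', q} = {p, p', q, q'}" by auto
  then show ?thesis using A e2 S unfolding edge_avoids_def by auto
qed



locale chain =
  fixes V :: "'a set" and E :: "'a \<Rightarrow> 'a \<Rightarrow> bool" and m :: nat and f :: "nat \<Rightarrow> 'a \<times> 'a"
  assumes rg: "reflexive_graph V E" and m0: "m > 0"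
    and f0: "f m = prod.swap (f 0)"
    and fS: "\<forall>i<m. (f i, f (Suc i)) \<in> Srel V E"
begin

definition g :: "nat \<Rightarrow> 'a \<times> 'a" where
  "g j = (if j mod (2*m) < m then f (j mod (2*m)) else prod.swap (f (j mod (2*m) - m)))"

lemma g_step: "(g j, g (Suc j)) \<in> Srel V E"
proof -
  define r where "r = j mod (2*m)"
  have r2: "r < 2*m" using m0 r_def by simp
  have sr: "Suc j mod (2*m) = (if Suc r = 2*m then 0 else Suc r)"
    unfolding r_def by (simp add: mod_Suc)
  show ?thesis
  proof (cases "Suc r < m")
    case True
    then have "g j = f r" "g (Suc j) = f (Suc r)" using sr r_def by (auto simp: g_def)
    then show ?thesis using fS True by simp
  next
    case F1: False
    show ?thesis
    proof (cases "Suc r = m")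
      case True
      then have "g j = f r" "g (Suc j) = prod.swap (f 0)" using sr r_def m0 by (auto simp: g_def)
      then show ?thesis using fS True f0 m0 by (metis lessI)
    next
      case F2: False
      then have rm: "m \<le> r" using F1 by simp
      show ?thesis
      proof (cases "Suc r = 2*m")
        case True
        then have rr: "r - m = m - 1" by simp
        have "g j = prod.swap (f (r - m))" "g (Suc j) = f 0" using sr r_def m0 rm True by (auto simp: g_def)
        then have "g j = prod.swap (f (m - 1))" "g (Suc j) = f 0" using rr by auto
        moreover have "(f (m-1), f m) \<in> Srel V E" using fS m0 by (metis Suc_pred' lessI diff_less zero_less_one)
        ultimately show ?thesis using f0 Srel_swap by (metis swap_swap)
      next
        case False
        then have "g j = prod.swap (f (r - m))" "g (Suc j) = prod.swap (f (Suc (r - m)))"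
          using sr r_def m0 rm F1 by (auto simp: g_def Suc_diff_le)
        moreover have "(f (r-m), f (Suc (r-m))) \<in> Srel V E" using fS r2 rm False by auto
        ultimately show ?thesis using Srel_swap by metis
      qed
    qed
  qed
qed

lemma g_shift: "g (j + m) = prod.swap (g j)"
proof -
  define r where "r = j mod (2*m)"
  have r2: "r < 2*m" using m0 r_def by simp
  have jm: "(j + m) mod (2*m) = (if r < m then r + m else r - m)"
  proof -
    have "(j + m) mod (2*m) = (r + m) mod (2*m)" unfolding r_def by (simp add: mod_add_left_eq)
    then show ?thesis using r2 by (auto simp: mod_if)
  qed
  show ?thesis
    using jm r2 unfolding g_def r_def[symmetric] by auto
qed

definition s :: "nat \<Rightarrow> 'a" where "s j = fst (g j)"

lemma g_eq: "g j = (s j, s (j + m))"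
  unfolding s_def g_shift by (cases "g j") auto

lemma s_per: "s (j + 2*m) = s j"
proof -
  have "(j + 2*m) mod (2*m) = j mod (2*m)" by simp
  then show ?thesis unfolding s_def g_def by simp
qed

lemma stepS: "s j \<in> V \<and> s (j+m) \<in> V \<and> s j \<noteq> s (j+m) \<and> s (Suc j) \<in> V \<and> s (Suc j + m) \<in> V \<and>
   s (Suc j) \<noteq> s (Suc j + m) \<and> E (s j) (s (Suc j)) \<and> E (s (j+m)) (s (Suc j + m)) \<and>
   \<not> E (s j) (s (Suc j + m)) \<and> \<not> E (s (j+m)) (s (Suc j))"
  using g_step[of j] unfolding g_eq by (rule Srel_D)

lemma Esym: "E a b \<Longrightarrow> E b a" using rg_sym[OF rg] .

lemma cA: "edge_avoids E (s j, s (Suc j)) (s (j+m), s (Suc (j+m)))"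
  using stepS[of j] by (intro avoid1[OF rg]) (auto dest: Esym)

lemma cB: "edge_avoids E (s (Suc j), s (Suc (Suc j))) (s (j+m), s (Suc (j+m)))"
  using stepS[of j] stepS[of "Suc j"] by (intro avoid2[OF rg]) (auto dest: Esym)

lemma cB': "edge_avoids E (s (j+m), s (Suc (j+m))) (s (Suc j), s (Suc (Suc j)))"
  using stepS[of j] stepS[of "Suc j"] by (intro avoid2[OF rg]) (auto dest: Esym)

lemma cE: "E (s j) (s (Suc j))" using stepS by blast
lemma cV: "s j \<in> V" using stepS by blast

end



lemma walk2: "reflexive_graph V E \<Longrightarrow> E a b \<Longrightarrow> is_walk V E [a,b]"
  unfolding is_walk_def by (auto simp: less_Suc_eq dest: rg_V1 rg_V2)

lemma walk3: "reflexive_graph V E \<Longrightarrow> E a b \<Longrightarrow> E b c \<Longrightarrow> is_walk V E [a,b,c]"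
  unfolding is_walk_def by (auto simp: less_Suc_eq nth_Cons split: nat.splits dest: rg_V1 rg_V2)

lemma eaw2: "edge_avoids E e (a,b) \<Longrightarrow> edge_avoids_walk E e [a,b]"
  unfolding edge_avoids_walk_def by (auto simp: less_Suc_eq)

lemma eaw3: "edge_avoids E e (a,b) \<Longrightarrow> edge_avoids E e (b,c) \<Longrightarrow> edge_avoids_walk E e [a,b,c]"
  unfolding edge_avoids_walk_def by (auto simp: less_Suc_eq)

context chain begin

definition tt :: "nat \<Rightarrow> nat" where "tt i = (if i \<le> m then i else i - 1)"
definition xx :: "nat \<Rightarrow> 'a" where "xx i = s (tt i)"
definition yy :: "nat \<Rightarrow> 'a" where "yy i = s (Suc (tt i))"

lemma mod1: "i \<le> 2*m \<Longrightarrow> (i + m) mod (2*m+1) = (if i \<le> m then i + m else i - m - 1)"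
  by (auto simp: mod_if)
lemma mod2: "i \<le> 2*m \<Longrightarrow> (i + m + 1) mod (2*m+1) = (if i < m then i + m + 1 else i - m)"
  by (auto simp: mod_if)

lemma s2m: "s (2*m) = s 0" "s (Suc (2*m)) = s 1"
  using s_per[of 0] s_per[of 1] by simp_all

lemma ast: "weak_edge_asteroid V E m xx yy"
  unfolding weak_edge_asteroid_def
proof (intro conjI allI impI)
  show "1 \<le> m" using m0 by simp
next
  fix i assume "i \<le> 2*m"
  show "E (xx i) (yy i)" unfolding xx_def yy_def by (rule cE)
next
  fix i assume i: "i \<le> 2*m"
  let ?a = "(i + m) mod (2 * m + 1)" and ?b = "(i + m + 1) mod (2 * m + 1)"
  show "\<exists>w. is_walk V E w \<and> {w ! 0, w ! 1} = {xx ?a, yy ?a} \<and>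
          {w ! (length w - 2), w ! (length w - 1)} = {xx ?b, yy ?b} \<and>
          edge_avoids_walk E (xx i, yy i) w"
  proof (cases "i = 0")
    case True
    have a: "?a = m" "?b = m + 1" using True m0 by auto
    show ?thesis
      apply (rule exI[of _ "[s m, s (Suc m)]"])
      using True a m0 walk2[OF rg cE[of m]] eaw2[OF cA[of 0]]
      by (simp add: xx_def yy_def tt_def)
  next
    case i0: False
    show ?thesis
    proof (cases "i \<le> m")
      case True
      have a: "?a = i + m" using mod1[OF \<open>i \<le> 2*m\<close>] True by simp
      have ta: "tt ?a = i + m - 1" using a i0 by (simp add: tt_def)
      have Av1: "edge_avoids E (s i, s (Suc i)) (s (i + m - 1), s (i + m))"
        using cB[of "i - 1"] i0 by (simp add: Suc_diff_Suc)
      have Av2: "edge_avoids E (s i, s (Suc i)) (s (i + m), s (Suc (i + m)))" using cA[of i] by simp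
      have W: "is_walk V E [s (i + m - 1), s (i + m), s (Suc (i + m))]"
      proof -
        have "Suc (i + m - 1) = i + m" using m0 by simp
        then show ?thesis using walk3[OF rg, of "s (i+m-1)" "s (i+m)" "s (Suc (i+m))"] cE[of "i+m-1"] cE[of "i+m"] by simp
      qed
      have last: "{xx ?b, yy ?b} = {s (i + m), s (Suc (i + m))}"
      proof (cases "i < m")
        case True
        then have "?b = i + m + 1" using mod2[OF \<open>i \<le> 2*m\<close>] by simp
        then show ?thesis using i0 by (simp add: xx_def yy_def tt_def)
      next
        case False
        then have "?b = 0" "i = m" using mod2[OF \<open>i \<le> 2*m\<close>] True by auto
        then show ?thesis using s2m by (simp add: xx_def yy_def tt_def mult_2)
      qed
      show ?thesis
        apply (rule exI[of _ "[s (i + m - 1), s (i + m), s (Suc (i + m))]"])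
        using W last ta eaw3[OF Av1 Av2] True m0 i0
        by (simp add: xx_def yy_def tt_def)
    next
      case False
      have a: "?a = i - m - 1" using mod1[OF \<open>i \<le> 2*m\<close>] False by simp
      have b: "?b = i - m" using mod2[OF \<open>i \<le> 2*m\<close>] False by simp
      define j where "j = i - m - 1"
      have ij: "i = j + m + 1" "i - m = Suc j" using False j_def by auto
      have jm: "j < m" using ij \<open>i \<le> 2*m\<close> by simp
      have Av1: "edge_avoids E (s (j + m), s (Suc (j + m))) (s j, s (Suc j))"
        using cA[of "j+m"] s_per[of j] s_per[of "Suc j"] by (simp add: mult_2 add.assoc)
      have Av2: "edge_avoids E (s (j + m), s (Suc (j + m))) (s (Suc j), s (Suc (Suc j)))"
        using cB'[of j] by simp
      have W: "is_walk V E [s j, s (Suc j), s (Suc (Suc j))]"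
        using walk3[OF rg cE[of j] cE[of "Suc j"]] by simp
      have xi: "xx i = s (j + m)" "yy i = s (Suc (j+m))" using False ij by (simp_all add: xx_def yy_def tt_def)
      show ?thesis
        apply (rule exI[of _ "[s j, s (Suc j), s (Suc (Suc j))]"])
        using W xi eaw3[OF Av1 Av2] jm
        unfolding a b j_def[symmetric] ij(2) by (simp add: xx_def yy_def tt_def)
    qed
  qed
qed

end

lemma inv_to_ast:
  assumes rg: "reflexive_graph V E" and "has_invertible_pair V E"
  shows "has_weak_edge_asteroid V E"
proof -
  from assms(2) obtain u v where uv: "u \<in> V" "v \<in> V" "u \<noteq> v" "pair_sim V E (u,v) (v,u)"
    unfolding has_invertible_pair_def by blast
  have "((u,v),(v,u)) \<in> (Srel V E)\<^sup>*" using pair_sim_to_rtr[OF uv(4)] .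
  then obtain n where "((u,v),(v,u)) \<in> (Srel V E) ^^ n" using rtrancl_power by blast
  then obtain f where f: "f 0 = (u,v)" "f n = (v,u)" "\<forall>i<n. (f i, f (Suc i)) \<in> Srel V E"
    by (auto simp: relpow_fun_conv)
  have n0: "n > 0" using f uv(3) by (cases n) auto
  interpret chain V E n f
    using rg n0 f by unfold_locales auto
  show ?thesis unfolding has_weak_edge_asteroid_def using ast by blast
qed



definition goodp :: "('a \<Rightarrow> 'a \<Rightarrow> bool) \<Rightarrow> 'a set \<Rightarrow> 'a \<Rightarrow> 'a \<Rightarrow> bool" where
  "goodp E X a b \<longleftrightarrow> a \<in> X \<and> (\<forall>a'\<in>X. E a' b \<longrightarrow> a' = a)"

lemma ex4: "(\<exists>j<(4::nat). P j) \<longleftrightarrow> P 0 \<or> P 1 \<or> P 2 \<or> P 3"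
  by (auto simp: numeral_eq_Suc less_Suc_eq)

lemma nodeg3:
  assumes "induces E S 4 H" "\<forall>i<4. \<exists>j<4. j \<noteq> i \<and> \<not> H i j" "z \<in> S" "\<forall>w\<in>S. w \<noteq> z \<longrightarrow> E z w"
  shows False
proof -
  obtain f where f: "bij_betw f {..<4} S" "\<forall>i<4. \<forall>j<4. i \<noteq> j \<longrightarrow> (E (f i) (f j) \<longleftrightarrow> H i j)"
    using assms(1) unfolding induces_def by blast
  obtain i where i: "i < 4" "z = f i" using f(1) assms(3) unfolding bij_betw_def by auto
  obtain j where j: "j < 4" "j \<noteq> i" "\<not> H i j" using assms(2) i(1) by blast
  have "f j \<in> S" using f(1) j(1) unfolding bij_betw_def by auto
  moreover have "f j \<noteq> f i" using f(1) i(1) j(1,2) unfolding bij_betw_def inj_on_def by auto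
  ultimately have "E (f i) (f j)" using assms(4) i(2) by auto
  then show False using f(2) i(1) j by auto
qed

lemma H_nonuniv: "\<forall>i<4. \<exists>j<4. j \<noteq> i \<and> \<not> twoK2 i j"
  "\<forall>i<4. \<exists>j<4. j \<noteq> i \<and> \<not> P4 i j" "\<forall>i<4. \<exists>j<4. j \<noteq> i \<and> \<not> C4 i j"
  by (simp_all add: all4 ex4 twoK2_def P4_def C4_def doubleton_eq_iff)

lemma deg_bound:
  assumes "induces E {x,y,q,q'} 4 twoK2 \<or> induces E {x,y,q,q'} 4 P4 \<or> induces E {x,y,q,q'} 4 C4"
    "z \<in> {x,y,q,q'}" "\<forall>w\<in>{x,y,q,q'}. w \<noteq> z \<longrightarrow> E z w"
  shows False
  using assms(1)
proof (elim disjE)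
  assume A: "induces E {x,y,q,q'} 4 twoK2" show False by (rule nodeg3[where H=twoK2, OF A H_nonuniv(1) assms(2,3)])
next
  assume A: "induces E {x,y,q,q'} 4 P4" show False by (rule nodeg3[where H=P4, OF A H_nonuniv(2) assms(2,3)])
next
  assume A: "induces E {x,y,q,q'} 4 C4" show False by (rule nodeg3[where H=C4, OF A H_nonuniv(3) assms(2,3)])
qed

lemma bstep:
  assumes rg: "reflexive_graph V E" and "E x y" "E q q'" "{x,y} \<inter> {q,q'} = {}"
    "a \<in> {x,y}" "a' \<in> {x,y}" "b \<in> {q,q'}" "b' \<in> {q,q'}" "\<not> E a b'" "\<not> E b a'"
  shows "((a,b),(a',b')) \<in> Srel V E"
proof -
  have V: "x \<in> V" "y \<in> V" "q \<in> V" "q' \<in> V" using assms(2,3) rg_V1[OF rg] rg_V2[OF rg] by blast+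
  have Exy: "\<forall>c\<in>{x,y}. \<forall>d\<in>{x,y}. E c d" using V assms(2) rg_refl[OF rg] rg_sym[OF rg] by blast
  have Eq: "\<forall>c\<in>{q,q'}. \<forall>d\<in>{q,q'}. E c d" using V assms(3) rg_refl[OF rg] rg_sym[OF rg] by blast
  show ?thesis apply (rule Srel_I)
    using assms V Exy Eq by auto
qed

lemma hubL:
  assumes rg: "reflexive_graph V E" and "E x y" "E q q'" "{x,y} \<inter> {q,q'} = {}"
    "ha \<in> {x,y}" "hb \<in> {q,q'}"
    "\<forall>a\<in>{x,y}. \<forall>b\<in>{q,q'}. (a = ha \<and> b = hb) \<or>
        \<not>(goodp E {x,y} a b \<or> goodp E {q,q'} b a) \<or> (\<not> E a hb \<and> \<not> E b ha)"
  shows "\<forall>a b. ((b \<in> {q,q'} \<and> goodp E {x,y} a b) \<or> (a \<in> {x,y} \<and> goodp E {q,q'} b a))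
      \<longrightarrow> ((a,b),(ha,hb)) \<in> (Srel V E)\<^sup>*"
proof (intro allI impI)
  fix a b assume ab: "(b \<in> {q,q'} \<and> goodp E {x,y} a b) \<or> (a \<in> {x,y} \<and> goodp E {q,q'} b a)"
  then have ab': "a \<in> {x,y}" "b \<in> {q,q'}" by (auto simp: goodp_def)
  show "((a,b),(ha,hb)) \<in> (Srel V E)\<^sup>*"
  proof (cases "a = ha \<and> b = hb")
    case True then show ?thesis by simp
  next
    case False
    then have "\<not> E a hb \<and> \<not> E b ha" using assms(7) ab ab' by blast
    then have "((a,b),(ha,hb)) \<in> Srel V E" using bstep[OF rg assms(2,3,4) ab'(1) assms(5) ab'(2) assms(6)] by blast
    then show ?thesis by blast
  qed
qed

lemma bundleL:
  assumes rg: "reflexive_graph V E" and av: "edge_avoids E (x,y) (q,q')"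
  shows "\<exists>h. \<forall>a b. ((b \<in> {q,q'} \<and> goodp E {x,y} a b) \<or> (a \<in> {x,y} \<and> goodp E {q,q'} b a))
      \<longrightarrow> ((a,b),h) \<in> (Srel V E)\<^sup>*"
proof -
  have e: "E x y" "E q q'" and disj: "{x,y} \<inter> {q,q'} = {}" using av unfolding edge_avoids_def by auto
  have S: "\<And>a b. E a b \<longleftrightarrow> E b a" using rg_sym[OF rg] by blast
  have cases: "(x = y \<and> q = q' \<and> \<not> E x q) \<or>
      (x = y \<and> q \<noteq> q' \<and> \<not> E x q \<and> \<not> E x q') \<or>
      (x \<noteq> y \<and> q = q' \<and> \<not> E x q \<and> \<not> E y q) \<or>
      (x \<noteq> y \<and> q \<noteq> q' \<and>
        (induces E {x, y, q, q'} 4 twoK2 \<or> induces E {x, y, q, q'} 4 P4 \<or>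
         induces E {x, y, q, q'} 4 C4))" using av unfolding edge_avoids_def by auto
  note H = hubL[OF rg e disj]
  show ?thesis
  proof (cases "x = y")
    case True
    then show ?thesis
    proof (cases "q = q'")
      case True
      show ?thesis apply (rule exI, rule H[of x q]) using True \<open>x = y\<close> cases by auto
    next
      case False
      show ?thesis apply (rule exI, rule H[of x q']) using False \<open>x = y\<close> cases S by (simp_all add: goodp_def)
    qed
  next
    case xy: False
    show ?thesis
    proof (cases "q = q'")
      case True
      show ?thesis apply (rule exI, rule H[of y q]) using True xy cases S by (simp_all add: goodp_def)
    next
      case qq: False
      have ind: "induces E {x, y, q, q'} 4 twoK2 \<or> induces E {x, y, q, q'} 4 P4 \<or>
         induces E {x, y, q, q'} 4 C4" using cases xy qq by auto
      have d: "x \<noteq> q" "x \<noteq> q'" "y \<noteq> q" "y \<noteq> q'" using disj by auto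
      have n1: "\<not> (E x q \<and> E x q')"
      proof
        assume A: "E x q \<and> E x q'"
        have "\<forall>w\<in>{x,y,q,q'}. w \<noteq> x \<longrightarrow> E x w" using A e by blast
        then show False using deg_bound[OF ind, of x] by simp
      qed
      have n2: "\<not> (E y q \<and> E y q')"
      proof
        assume A: "E y q \<and> E y q'"
        have "\<forall>w\<in>{x,y,q,q'}. w \<noteq> y \<longrightarrow> E y w" using A e S by blast
        then show False using deg_bound[OF ind, of y] by simp
      qed
      have n3: "\<not> (E x q \<and> E y q)"
      proof
        assume A: "E x q \<and> E y q"
        have "\<forall>w\<in>{x,y,q,q'}. w \<noteq> q \<longrightarrow> E q w" using A e S by blast
        then show False using deg_bound[OF ind, of q] by simp
      qed
      have n4: "\<not> (E x q' \<and> E y q')"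
      proof
        assume A: "E x q' \<and> E y q'"
        have "\<forall>w\<in>{x,y,q,q'}. w \<noteq> q' \<longrightarrow> E q' w" using A e S by blast
        then show False using deg_bound[OF ind, of q'] by simp
      qed
      show ?thesis
      proof (cases "E x q")
        case True
        show ?thesis apply (rule exI, rule H[of y q']) using True n1 n2 n3 n4 xy qq d S by (simp_all add: goodp_def)
      next
        case F1: False
        show ?thesis
        proof (cases "E y q'")
          case True
          show ?thesis apply (rule exI, rule H[of x q]) using True F1 n1 n2 n3 n4 xy qq d S by (simp_all add: goodp_def)
        next
          case F2: False
          show ?thesis
          proof (cases "E x q'")
            case True
            show ?thesis apply (rule exI, rule H[of y q]) using True F1 F2 n1 n2 n3 n4 xy qq d S by (simp_all add: goodp_def)
          next
            case F3: False
            show ?thesis apply (rule exI, rule H[of x q']) using F1 F2 F3 n1 n2 n3 n4 xy qq d S by (simp_all add: goodp_def)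
          qed
        qed
      qed
    qed
  qed
qed

lemma exgood:
  assumes rg: "reflexive_graph V E" and av: "edge_avoids E (x,y) (q,q')" and b: "b \<in> {q,q'}"
  shows "\<exists>a. goodp E {x,y} a b"
proof -
  have e: "E x y" "E q q'" and disj: "{x,y} \<inter> {q,q'} = {}" using av unfolding edge_avoids_def by auto
  have S: "\<And>a b. E a b \<longleftrightarrow> E b a" using rg_sym[OF rg] by blast
  have cases: "(x = y \<and> q = q' \<and> \<not> E x q) \<or>
      (x = y \<and> q \<noteq> q' \<and> \<not> E x q \<and> \<not> E x q') \<or>
      (x \<noteq> y \<and> q = q' \<and> \<not> E x q \<and> \<not> E y q) \<or>
      (x \<noteq> y \<and> q \<noteq> q' \<and>
        (induces E {x, y, q, q'} 4 twoK2 \<or> induces E {x, y, q, q'} 4 P4 \<or>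
         induces E {x, y, q, q'} 4 C4))" using av unfolding edge_avoids_def by auto
  have nb: "\<not> (x \<noteq> y \<and> E x b \<and> E y b)"
  proof
    assume A: "x \<noteq> y \<and> E x b \<and> E y b"
    show False
    proof (cases "q = q'")
      case True then show False using cases A b by auto
    next
      case qq: False
      have ind: "induces E {x, y, q, q'} 4 twoK2 \<or> induces E {x, y, q, q'} 4 P4 \<or>
         induces E {x, y, q, q'} 4 C4" using cases A qq by auto
      have d: "x \<noteq> q" "x \<noteq> q'" "y \<noteq> q" "y \<noteq> q'" using disj by auto
      show False using deg_bound[OF ind, of b] A b e d qq S by auto
    qed
  qed
  show ?thesis
  proof (cases "E y b")
    case True then show ?thesis using nb by (rule_tac x=y in exI) (auto simp: goodp_def)
  next
    case False then show ?thesis by (rule_tac x=x in exI) (auto simp: goodp_def)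
  qed
qed



lemma hub_conn:
  assumes rg: "reflexive_graph V E" and "(p,h) \<in> (Srel V E)\<^sup>*" "(q,h) \<in> (Srel V E)\<^sup>*"
  shows "(p,q) \<in> (Srel V E)\<^sup>*"
  using assms(2) Srel_rtr_sym[OF rg assms(3)] by (rule rtrancl_trans)

lemma walkconn:
  assumes rg: "reflexive_graph V E" and w: "is_walk V E w" and av: "edge_avoids_walk E (x,y) w"
    and a: "goodp E {x,y} a (w!0)"
  shows "i < length w \<Longrightarrow> goodp E {x,y} a' (w!i) \<Longrightarrow> ((a, w!0), (a', w!i)) \<in> (Srel V E)\<^sup>*"
proof (induction i arbitrary: a')
  case 0
  have len: "Suc 0 < length w" using w by (simp add: is_walk_def)
  have e0: "edge_avoids E (x,y) (w!0, w!Suc 0)" using av len by (simp add: edge_avoids_walk_def)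
  obtain h where h: "\<forall>a b. ((b \<in> {w!0,w!Suc 0} \<and> goodp E {x,y} a b) \<or> (a \<in> {x,y} \<and> goodp E {w!0,w!Suc 0} b a))
      \<longrightarrow> ((a,b),h) \<in> (Srel V E)\<^sup>*" using bundleL[OF rg e0] by blast
  show ?case using h a 0 hub_conn[OF rg] by (metis insertI1)
next
  case (Suc i)
  have ei: "edge_avoids E (x,y) (w!i, w!Suc i)" using av Suc.prems(1) by (simp add: edge_avoids_walk_def)
  obtain a'' where a'': "goodp E {x,y} a'' (w!i)" using exgood[OF rg ei] by blast
  have IH: "((a, w!0), (a'', w!i)) \<in> (Srel V E)\<^sup>*" using Suc.IH[OF _ a''] Suc.prems(1) by simp
  obtain h where h: "\<forall>a b. ((b \<in> {w!i,w!Suc i} \<and> goodp E {x,y} a b) \<or> (a \<in> {x,y} \<and> goodp E {w!i,w!Suc i} b a))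
      \<longrightarrow> ((a,b),h) \<in> (Srel V E)\<^sup>*" using bundleL[OF rg ei] by blast
  have "((a'', w!i), (a', w!Suc i)) \<in> (Srel V E)\<^sup>*"
    using h a'' Suc.prems(2) hub_conn[OF rg] by (metis insertI1 insertI2 singletonI)
  then show ?case using IH by (rule rtrancl_trans[rotated])
qed

lemma walk_pairs:
  assumes rg: "reflexive_graph V E" and w: "is_walk V E w" and av: "edge_avoids_walk E (x,y) w"
    and j: "j1 < length w" "j2 < length w"
    and g: "goodp E {x,y} a (w!j1)" "goodp E {x,y} a' (w!j2)"
  shows "((a, w!j1), (a', w!j2)) \<in> (Srel V E)\<^sup>*"
proof -
  have len: "Suc 0 < length w" using w by (simp add: is_walk_def)
  have e0: "edge_avoids E (x,y) (w!0, w!Suc 0)" using av len by (simp add: edge_avoids_walk_def)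
  obtain a0 where a0: "goodp E {x,y} a0 (w!0)" using exgood[OF rg e0] by blast
  show ?thesis using walkconn[OF rg w av a0 j(1) g(1)] walkconn[OF rg w av a0 j(2) g(2)]
    by (metis Srel_rtr_sym[OF rg] rtrancl_trans)
qed



lemma ast_to_inv:
  assumes rg: "reflexive_graph V E" and ast: "weak_edge_asteroid V E k x y"
  shows "has_invertible_pair V E"
proof -
  define N where "N = 2*k+1"
  define A where "A i = (i + k) mod N" for i
  define B where "B i = (i + k + 1) mod N" for i
  define P where "P i w \<longleftrightarrow> is_walk V E w \<and> {w ! 0, w ! 1} = {x (A i), y (A i)} \<and>
        {w ! (length w - 2), w ! (length w - 1)} = {x (B i), y (B i)} \<and>
        edge_avoids_walk E (x i, y i) w" for i w
  have k1: "k \<ge> 1" using ast by (simp add: weak_edge_asteroid_def)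
  have exW: "\<And>i. i < N \<Longrightarrow> \<exists>w. P i w"
    using ast unfolding weak_edge_asteroid_def P_def A_def B_def N_def by auto
  define W where "W i = (SOME w. P i w)" for i
  have PW: "\<And>i. i < N \<Longrightarrow> P i (W i)" using exW unfolding W_def by (metis someI_ex)
  have AN: "\<And>i. A i < N" "\<And>i. B i < N" unfolding A_def B_def N_def by auto
  have ABi: "\<And>i. i < N \<Longrightarrow> A (B i) = i"
  proof -
    fix i assume i: "i < N"
    have "A (B i) = ((i + k + 1) mod N + k) mod N" unfolding A_def B_def by simp
    also have "\<dots> = (i + k + 1 + k) mod N" by (rule mod_add_left_eq)
    also have "\<dots> = (i + N) mod N" by (simp add: N_def mult_2 add.assoc)
    also have "\<dots> = i" using i by simp
    finally show "A (B i) = i" .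
  qed
  have F1: "\<And>i a b a' b'. i < N \<Longrightarrow> b \<in> {x (A i), y (A i)} \<Longrightarrow> goodp E {x i, y i} a b \<Longrightarrow>
      b' \<in> {x (B i), y (B i)} \<Longrightarrow> goodp E {x i, y i} a' b' \<Longrightarrow> ((a,b),(a',b')) \<in> (Srel V E)\<^sup>*"
  proof -
    fix i a b a' b' assume i: "i < N" and b: "b \<in> {x (A i), y (A i)}" and ga: "goodp E {x i, y i} a b"
      and b': "b' \<in> {x (B i), y (B i)}" and ga': "goodp E {x i, y i} a' b'"
    let ?w = "W i"
    have p: "P i ?w" using PW i .
    have len: "length ?w \<ge> 2" using p by (simp add: P_def is_walk_def)
    obtain j1 where j1: "j1 < length ?w" "b = ?w ! j1"
      using b p len unfolding P_def by (metis insert_iff singletonD less_le_trans one_less_numeral_iff semiring_norm(76) zero_less_numeral)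
    obtain j2 where j2: "j2 < length ?w" "b' = ?w ! j2"
      using b' p len unfolding P_def by (metis insert_iff singletonD diff_less zero_less_numeral zero_less_one less_le_trans)
    show "((a,b),(a',b')) \<in> (Srel V E)\<^sup>*"
    proof -
      have pw: "is_walk V E ?w" and pe: "edge_avoids_walk E (x i, y i) ?w" using p unfolding P_def by auto
      show ?thesis using walk_pairs[OF rg pw pe j1(1) j2(1)] ga ga' j1(2) j2(2) by simp
    qed
  qed
  have F2: "\<And>i a b c d. i < N \<Longrightarrow> b \<in> {x (B i), y (B i)} \<Longrightarrow> goodp E {x i, y i} a b \<Longrightarrow>
      c \<in> {x i, y i} \<Longrightarrow> goodp E {x (B i), y (B i)} d c \<Longrightarrow> ((a,b),(c,d)) \<in> (Srel V E)\<^sup>*"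
  proof -
    fix i a b c d assume i: "i < N" and b: "b \<in> {x (B i), y (B i)}" and ga: "goodp E {x i, y i} a b"
      and c: "c \<in> {x i, y i}" and gd: "goodp E {x (B i), y (B i)} d c"
    let ?w = "W i"
    have p: "P i ?w" using PW i .
    have len: "length ?w \<ge> 2" using p by (simp add: P_def is_walk_def)
    have "Suc (length ?w - 2) < length ?w" using len by simp
    then have ev: "edge_avoids E (x i, y i) (?w ! (length ?w - 2), ?w ! Suc (length ?w - 2))"
      using p unfolding P_def edge_avoids_walk_def by blast
    have sl: "Suc (length ?w - 2) = length ?w - 1" using len by simp
    have ev': "edge_avoids E (x i, y i) (?w ! (length ?w - 2), ?w ! (length ?w - 1))" using ev sl by simp
    have eqs: "{?w ! (length ?w - 2), ?w ! (length ?w - 1)} = {x (B i), y (B i)}" using p by (simp add: P_def)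
    obtain h where h: "\<forall>a b. ((b \<in> {x (B i), y (B i)} \<and> goodp E {x i, y i} a b) \<or>
         (a \<in> {x i, y i} \<and> goodp E {x (B i), y (B i)} b a)) \<longrightarrow> ((a,b),h) \<in> (Srel V E)\<^sup>*"
      using bundleL[OF rg ev'] unfolding eqs by blast
    show "((a,b),(c,d)) \<in> (Srel V E)\<^sup>*"
      using h b ga c gd hub_conn[OF rg] by metis
  qed
  have exQ: "\<And>i. i < N \<Longrightarrow> \<exists>a b. b \<in> {x (A i), y (A i)} \<and> goodp E {x i, y i} a b"
  proof -
    fix i assume i: "i < N"
    let ?w = "W i"
    have p: "P i ?w" using PW i .
    have len: "length ?w \<ge> 2" using p by (simp add: P_def is_walk_def)
    have ev: "edge_avoids E (x i, y i) (?w ! 0, ?w ! Suc 0)"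
      using p len unfolding P_def edge_avoids_walk_def by auto
    obtain a where "goodp E {x i, y i} a (?w ! 0)" using exgood[OF rg ev] by blast
    moreover have "?w ! 0 \<in> {x (A i), y (A i)}" using p by (auto simp: P_def)
    ultimately show "\<exists>a b. b \<in> {x (A i), y (A i)} \<and> goodp E {x i, y i} a b" by blast
  qed
  have exP': "\<And>i. i < N \<Longrightarrow> \<exists>a b. b \<in> {x (B i), y (B i)} \<and> goodp E {x i, y i} a b"
  proof -
    fix i assume i: "i < N"
    let ?w = "W i"
    have p: "P i ?w" using PW i .
    have len: "length ?w \<ge> 2" using p by (simp add: P_def is_walk_def)
    have "Suc (length ?w - 2) < length ?w" using len by simp
    then have ev: "edge_avoids E (x i, y i) (?w ! (length ?w - 2), ?w ! Suc (length ?w - 2))"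
      using p unfolding P_def edge_avoids_walk_def by blast
    obtain a where "goodp E {x i, y i} a (?w ! (length ?w - 2))" using exgood[OF rg ev] by blast
    moreover have "?w ! (length ?w - 2) \<in> {x (B i), y (B i)}" using p by (auto simp: P_def)
    ultimately show "\<exists>a b. b \<in> {x (B i), y (B i)} \<and> goodp E {x i, y i} a b" by blast
  qed
  define Q where "Q i = (SOME p. \<exists>a b. p = (a,b) \<and> b \<in> {x (A i), y (A i)} \<and> goodp E {x i, y i} a b)" for i
  have QP: "\<And>i. i < N \<Longrightarrow> snd (Q i) \<in> {x (A i), y (A i)} \<and> goodp E {x i, y i} (fst (Q i)) (snd (Q i))"
  proof -
    fix i assume i: "i < N"
    have "\<exists>p. \<exists>a b. p = (a,b) \<and> b \<in> {x (A i), y (A i)} \<and> goodp E {x i, y i} a b" using exQ[OF i] by blast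
    then have "\<exists>a b. Q i = (a,b) \<and> b \<in> {x (A i), y (A i)} \<and> goodp E {x i, y i} a b"
      unfolding Q_def by (rule someI_ex)
    then show "snd (Q i) \<in> {x (A i), y (A i)} \<and> goodp E {x i, y i} (fst (Q i)) (snd (Q i))" by auto
  qed
  have key: "\<And>i. i < N \<Longrightarrow> (Q i, prod.swap (Q (B i))) \<in> (Srel V E)\<^sup>*"
  proof -
    fix i assume i: "i < N"
    obtain a b where ab: "b \<in> {x (B i), y (B i)}" "goodp E {x i, y i} a b" using exP'[OF i] by blast
    have q1: "((fst (Q i), snd (Q i)), (a,b)) \<in> (Srel V E)\<^sup>*"
      using F1[OF i _ _ ab] QP[OF i] by blast
    have qj: "snd (Q (B i)) \<in> {x i, y i}" "goodp E {x (B i), y (B i)} (fst (Q (B i))) (snd (Q (B i)))"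
      using QP[OF AN(2)[of i]] ABi[OF i] by auto
    have q2: "((a,b), (snd (Q (B i)), fst (Q (B i)))) \<in> (Srel V E)\<^sup>*"
      using F2[OF i ab qj] .
    show "(Q i, prod.swap (Q (B i))) \<in> (Srel V E)\<^sup>*"
      using rtrancl_trans[OF q1 q2] by (simp add: prod.swap_def)
  qed
  define idx where "idx n = (n * (k+1)) mod N" for n
  have idxS: "\<And>n. B (idx n) = idx (Suc n)"
  proof -
    fix n
    have "B (idx n) = ((n * (k+1)) mod N + (k + 1)) mod N" unfolding B_def idx_def by (simp add: add.assoc)
    also have "\<dots> = (n * (k+1) + (k+1)) mod N" by (rule mod_add_left_eq)
    also have "\<dots> = idx (Suc n)" unfolding idx_def by (simp add: algebra_simps)
    finally show "B (idx n) = idx (Suc n)" .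
  qed
  have idxN: "\<And>n. idx n < N" unfolding idx_def N_def by simp
  have iter: "\<And>n. (Q 0, (if even n then Q (idx n) else prod.swap (Q (idx n)))) \<in> (Srel V E)\<^sup>*"
  proof -
    fix n show "(Q 0, (if even n then Q (idx n) else prod.swap (Q (idx n)))) \<in> (Srel V E)\<^sup>*"
    proof (induction n)
      case 0 show ?case by (simp add: idx_def)
    next
      case (Suc n)
      have K: "(Q (idx n), prod.swap (Q (idx (Suc n)))) \<in> (Srel V E)\<^sup>*"
        using key[OF idxN[of n]] idxS by simp
      show ?case
      proof (cases "even n")
        case True
        then show ?thesis using Suc.IH K by (simp add: rtrancl_trans)
      next
        case False
        have "(prod.swap (Q (idx n)), Q (idx (Suc n))) \<in> (Srel V E)\<^sup>*"
          using Srel_rtr_swap[OF K] by simp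
        then show ?thesis using Suc.IH False by (simp add: rtrancl_trans)
      qed
    qed
  qed
  have "idx N = 0" unfolding idx_def by simp
  moreover have "odd N" unfolding N_def by simp
  ultimately have inv: "(Q 0, prod.swap (Q 0)) \<in> (Srel V E)\<^sup>*" using iter[of N] by simp
  have N0: "0 < N" unfolding N_def by simp
  let ?w = "W 0"
  have p: "P 0 ?w" using PW N0 .
  have len: "length ?w \<ge> 2" using p by (simp add: P_def is_walk_def)
  have ev: "edge_avoids E (x 0, y 0) (?w ! 0, ?w ! Suc 0)"
    using p len unfolding P_def edge_avoids_walk_def by auto
  have disj: "{x 0, y 0} \<inter> {?w ! 0, ?w ! Suc 0} = {}" "E (x 0) (y 0)" "E (?w ! 0) (?w ! Suc 0)"
    using ev unfolding edge_avoids_def by auto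
  have q0: "snd (Q 0) \<in> {?w ! 0, ?w ! Suc 0}" "fst (Q 0) \<in> {x 0, y 0}"
    using QP[OF N0] p by (auto simp: P_def goodp_def)
  have ne: "fst (Q 0) \<noteq> snd (Q 0)" using q0 disj(1) by auto
  have V4: "x 0 \<in> V" "y 0 \<in> V" "?w ! 0 \<in> V" "?w ! Suc 0 \<in> V"
    using rg_V1[OF rg disj(2)] rg_V2[OF rg disj(2)] rg_V1[OF rg disj(3)] rg_V2[OF rg disj(3)] by auto
  have V: "fst (Q 0) \<in> V" "snd (Q 0) \<in> V" using q0 V4 by auto
  have "pair_sim V E (fst (Q 0), snd (Q 0)) (snd (Q 0), fst (Q 0))"
    apply (rule rtr_to_pair_sim[OF rg])
    using inv ne V by (auto simp: Zset_def prod.swap_def)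
  then show ?thesis unfolding has_invertible_pair_def using ne V by blast
qed

theorem theorem6:
  fixes V :: "'a set" and E :: "'a \<Rightarrow> 'a \<Rightarrow> bool"
  assumes "finite V" and "reflexive_graph V E"
  shows "has_invertible_pair V E \<longleftrightarrow> has_weak_edge_asteroid V E"
  using inv_to_ast[OF assms(2)] ast_to_inv[OF assms(2)] unfolding has_weak_edge_asteroid_def by blast


end
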